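(* There is a constant $C$ such that for every $n\ge 1$ and every non-constant symmetric total Boolean function $f:\{0,1\}^n\rightarrow\{0,1\}$ (i.e. $f(x)$ depends only on the Hamming weight $|x|$), $WUQ(f)\ge \frac{1}{2}\log n-C$.
   Context: A quantum query algorithm alternates input-independent unitaries with the oracle $O_x:|i,b,z\rangle\mapsto|i,b\oplus x_i,z\rangle$ and measures an output bit. For an algorithm whose minimum over inputs of the probability of outputting $f(x)$ is $p>1/2$, its bias is $\beta=p-1/2$ and its weakly unbounded cost is (number of queries) $+\log(1/(2\beta))$; $WUQ(f)$ is the minimum weakly unbounded cost over quantum query algorithms. $\log$ is base 2. *)

theory Defs
  imports Complex_Main "Jordan_Normal_Form.Schur_Decomposition"
begin

text \<open>Basis states |i,b,z> with i < n (query index), b < 2 (answer bit),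
  z < m (workspace) are encoded as the index i + n*(b + 2*z) in a space of
  dimension 2*n*m.\<close>

definition qdim :: "nat \<Rightarrow> nat \<Rightarrow> nat" where
  "qdim n m = 2 * n * m"

definition unitary_of_dim :: "nat \<Rightarrow> complex mat \<Rightarrow> bool" where
  "unitary_of_dim d U \<longleftrightarrow> U \<in> carrier_mat d d \<and> U * mat_adjoint U = 1\<^sub>m d"

text \<open>Query operator O_x : |i,b,z> \<mapsto> |i, b xor x_i, z>.\<close>
definition query_op :: "nat \<Rightarrow> nat \<Rightarrow> bool list \<Rightarrow> complex mat" where
  "query_op n m x = mat (qdim n m) (qdim n m) (\<lambda>(r, c).
     let i = c mod n; b = (c div n) mod 2; z = c div (2 * n);
         b' = (if x ! i then 1 - b else b)
     in if r = i + n * (b' + 2 * z) then 1 else 0)"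

text \<open>An algorithm is given by a workspace size m and the list of unitaries
  [U_0, ..., U_T]; it computes U_T O_x ... O_x U_1 O_x U_0 |0>.\<close>
fun final_state :: "nat \<Rightarrow> nat \<Rightarrow> complex mat list \<Rightarrow> bool list \<Rightarrow> complex vec" where
  "final_state n m [] x = unit_vec (qdim n m) 0"
| "final_state n m (U # Us) x =
     foldl (\<lambda>v V. V *\<^sub>v (query_op n m x *\<^sub>v v)) (U *\<^sub>v unit_vec (qdim n m) 0) Us"

definition num_queries :: "complex mat list \<Rightarrow> nat" where
  "num_queries Us = length Us - 1"

definition valid_alg :: "nat \<Rightarrow> nat \<Rightarrow> complex mat list \<Rightarrow> bool" where
  "valid_alg n m Us \<longleftrightarrow> m \<ge> 1 \<and> Us \<noteq> [] \<and> (\<forall>U\<in>set Us. unitary_of_dim (qdim n m) U)"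

definition prob_output :: "nat \<Rightarrow> nat \<Rightarrow> complex mat list \<Rightarrow> bool list \<Rightarrow> bool \<Rightarrow> real" where
  "prob_output n m Us x c =
     (\<Sum>r<qdim n m. if ((r div n) mod 2 = 1) = c
                      then (cmod (final_state n m Us x $ r))\<^sup>2 else 0)"

definition inputs :: "nat \<Rightarrow> bool list set" where
  "inputs n = {x. length x = n}"

definition hamming_weight :: "bool list \<Rightarrow> nat" where
  "hamming_weight x = length (filter id x)"

definition success_prob :: "nat \<Rightarrow> (bool list \<Rightarrow> bool) \<Rightarrow> nat \<Rightarrow> complex mat list \<Rightarrow> real" where
  "success_prob n f m Us = Min ((\<lambda>x. prob_output n m Us x (f x)) ` inputs n)"

definition bias :: "nat \<Rightarrow> (bool list \<Rightarrow> bool) \<Rightarrow> nat \<Rightarrow> complex mat list \<Rightarrow> real" where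
  "bias n f m Us = success_prob n f m Us - 1/2"

definition wu_cost :: "nat \<Rightarrow> (bool list \<Rightarrow> bool) \<Rightarrow> nat \<Rightarrow> complex mat list \<Rightarrow> real" where
  "wu_cost n f m Us = real (num_queries Us) + log 2 (1 / (2 * bias n f m Us))"

definition WUQ :: "nat \<Rightarrow> (bool list \<Rightarrow> bool) \<Rightarrow> real" where
  "WUQ n f = Inf {wu_cost n f m Us | m Us. valid_alg n m Us \<and> bias n f m Us > 0}"

definition symmetric_fun :: "nat \<Rightarrow> (bool list \<Rightarrow> bool) \<Rightarrow> bool" where
  "symmetric_fun n f \<longleftrightarrow> (\<forall>x\<in>inputs n. \<forall>y\<in>inputs n.
      hamming_weight x = hamming_weight y \<longrightarrow> f x = f y)"

definition nonconstant_fun :: "nat \<Rightarrow> (bool list \<Rightarrow> bool) \<Rightarrow> bool" where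
  "nonconstant_fun n f \<longleftrightarrow> (\<exists>x\<in>inputs n. \<exists>y\<in>inputs n. f x \<noteq> f y)"

end

theory Submission
  imports Defs "HOL-Analysis.L2_Norm"
begin

definition flp :: "nat \<Rightarrow> nat \<Rightarrow> nat" where
  "flp n c = c mod n + n * ((1 - c div n mod 2) + 2 * (c div (2*n)))"

definition qsig :: "nat \<Rightarrow> bool list \<Rightarrow> nat \<Rightarrow> nat" where
  "qsig n x c = (if x ! (c mod n) then flp n c else c)"

lemma decomp: "(c::nat) = c mod n + n * (c div n mod 2 + 2 * (c div (2*n)))"
proof -
  have "c div n = c div n mod 2 + 2 * (c div n div 2)" by simp
  moreover have "c div n div 2 = c div (2*n)" by (simp add: div_mult2_eq mult.commute)
  ultimately show ?thesis by (metis mod_mult_div_eq add.commute)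
qed

lemma div_lin: assumes "(n::nat) \<ge> 1" "i < n" shows "(i + n * k) div n = k" and "(i + n*k) mod n = i"
proof -
  have "n \<noteq> 0" using assms by simp
  then have "(i + n * k) div n = k + i div n" by (rule div_mult_self2)
  then show "(i + n * k) div n = k" using assms by simp
  show "(i + n*k) mod n = i" using assms by simp
qed

lemma flp_props:
  assumes n: "n \<ge> 1"
  shows "flp n c mod n = c mod n"
    and "flp n c div n mod 2 = 1 - c div n mod 2"
    and "flp n c div (2*n) = c div (2*n)"
    and "flp n (flp n c) = c"
    and "c < 2*n*m \<Longrightarrow> flp n c < 2*n*m"
proof -
  have i: "c mod n < n" using n by simp
  have dv: "flp n c div n = (1 - c div n mod 2) + 2 * (c div (2*n))"
    unfolding flp_def using div_lin(1)[OF n i] by blast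
  show 1: "flp n c mod n = c mod n" unfolding flp_def using div_lin(2)[OF n i] by blast
  have "c div n mod 2 = 0 \<or> c div n mod 2 = 1" by auto
  then show 2: "flp n c div n mod 2 = 1 - c div n mod 2" using dv by auto
  have "flp n c div n div 2 = c div (2*n)" using dv by simp
  then show 3: "flp n c div (2*n) = c div (2*n)" by (simp add: div_mult2_eq mult.commute)
  have "c div n mod 2 < 2" by simp
  then have "1 - (1 - c div n mod 2) = c div n mod 2" by linarith
  then show "flp n (flp n c) = c" using 1 2 3 decomp[of c n] unfolding flp_def[of n "flp n c"] by simp
  assume c: "c < 2*n*m"
  have z: "c div (2*n) < m" using c by (intro less_mult_imp_div_less) (simp add: mult.commute)
  have "flp n c < n + n * (1 + 2 * (c div (2*n)))"
    unfolding flp_def using i by (intro add_less_le_mono mult_le_mono) auto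
  also have "\<dots> = n * (2 * (c div (2*n) + 1))" by (simp add: algebra_simps)
  also have "\<dots> \<le> n * (2 * m)" using z by (intro mult_le_mono) auto
  finally show "flp n c < 2*n*m" by simp
qed

lemma qsig_props:
  assumes n: "n \<ge> 1"
  shows "qsig n x (qsig n x c) = c" and "c < qdim n m \<Longrightarrow> qsig n x c < qdim n m"
    and "qsig n x c mod n = c mod n"
  using flp_props[OF n] unfolding qsig_def qdim_def by auto

lemma query_entry:
  assumes n: "n \<ge> 1" and r: "r < qdim n m" and c: "c < qdim n m"
  shows "query_op n m x $$ (r, c) = (if r = qsig n x c then 1 else 0)"
proof -
  have "(let i = c mod n; b = (c div n) mod 2; z = c div (2 * n);
         b' = (if x ! i then 1 - b else b)
     in if r = i + n * (b' + 2 * z) then 1 else 0) = (if r = qsig n x c then 1 else (0::complex))"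
    unfolding Let_def qsig_def flp_def using decomp[of c n] by auto
  then show ?thesis unfolding query_op_def using r c by simp
qed

lemma query_apply:
  assumes n: "n \<ge> 1" and r: "r < qdim n m" and v: "v \<in> carrier_vec (qdim n m)"
  shows "(query_op n m x *\<^sub>v v) $ r = v $ qsig n x r"
proof -
  let ?d = "qdim n m"
  have "(query_op n m x *\<^sub>v v) $ r = (\<Sum>c<?d. query_op n m x $$ (r, c) * v $ c)"
    using r v unfolding mult_mat_vec_def scalar_prod_def query_op_def
    by (simp add: lessThan_atLeast0)
  also have "\<dots> = (\<Sum>c<?d. if c = qsig n x r then v $ c else 0)"
  proof (rule sum.cong[OF refl])
    fix c assume c: "c \<in> {..<?d}"
    have "(r = qsig n x c) = (c = qsig n x r)" using qsig_props(1)[OF n] by metis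
    then show "query_op n m x $$ (r, c) * v $ c = (if c = qsig n x r then v $ c else 0)"
      using query_entry[OF n r] c by auto
  qed
  also have "\<dots> = v $ qsig n x r" using qsig_props(2)[OF n r] by (simp add: sum.delta)
  finally show ?thesis .
qed

definition nsq :: "complex vec \<Rightarrow> real" where
  "nsq v = (\<Sum>r<dim_vec v. (cmod (v $ r))\<^sup>2)"

lemma adj_entry:
  assumes U: "U \<in> carrier_mat d d" and l: "l < d" and r: "r < d"
  shows "mat_adjoint U $$ (l, r) = cnj (U $$ (r, l))"
  using U l r unfolding mat_adjoint_def mat_of_rows_def by auto

lemma unitary_left:
  assumes "unitary_of_dim d U" and l: "l < d" and j: "j < d"
  shows "(\<Sum>r<d. cnj (U $$ (r, l)) * U $$ (r, j)) = (if l = j then 1 else 0)"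
proof -
  have U: "U \<in> carrier_mat d d" and UA: "U * mat_adjoint U = 1\<^sub>m d"
    using assms(1) unfolding unitary_of_dim_def by auto
  have A: "mat_adjoint U \<in> carrier_mat d d" using U unfolding mat_adjoint_def by auto
  have AU: "mat_adjoint U * U = 1\<^sub>m d" by (rule mat_mult_left_right_inverse[OF U A UA])
  have "(mat_adjoint U * U) $$ (l, j) = (\<Sum>r<d. mat_adjoint U $$ (l, r) * U $$ (r, j))"
    using U A l j by (simp add: scalar_prod_def lessThan_atLeast0)
  also have "\<dots> = (\<Sum>r<d. cnj (U $$ (r, l)) * U $$ (r, j))"
    using adj_entry[OF U l] by simp
  finally show ?thesis using AU l j by simp
qed

lemma mult_vec_entry:
  assumes U: "U \<in> carrier_mat d d" and v: "v \<in> carrier_vec d" and r: "r < d"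
  shows "(U *\<^sub>v v) $ r = (\<Sum>j<d. U $$ (r, j) * v $ j)"
  using U v r by (simp add: scalar_prod_def lessThan_atLeast0)

lemma unitary_nsq:
  assumes Uu: "unitary_of_dim d U" and v: "v \<in> carrier_vec d"
  shows "nsq (U *\<^sub>v v) = nsq v" and "U *\<^sub>v v \<in> carrier_vec d"
proof -
  have U: "U \<in> carrier_mat d d" using Uu unfolding unitary_of_dim_def by auto
  show "U *\<^sub>v v \<in> carrier_vec d" using U v by auto
  have dUv: "dim_vec (U *\<^sub>v v) = d" using U by simp
  have "complex_of_real (nsq (U *\<^sub>v v)) = (\<Sum>r<d. (U *\<^sub>v v) $ r * cnj ((U *\<^sub>v v) $ r))"
    by (simp only: nsq_def of_real_sum dUv complex_norm_square)
  also have "\<dots> = (\<Sum>r<d. (\<Sum>j<d. U $$ (r, j) * v $ j) * (\<Sum>l<d. cnj (U $$ (r, l)) * cnj (v $ l)))"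
    using mult_vec_entry[OF U v] by simp
  also have "\<dots> = (\<Sum>r<d. \<Sum>j<d. \<Sum>l<d. v $ j * cnj (v $ l) * (cnj (U $$ (r, l)) * U $$ (r, j)))"
    by (intro sum.cong refl) (simp add: sum_product mult_ac)
  also have "\<dots> = (\<Sum>j<d. \<Sum>l<d. \<Sum>r<d. v $ j * cnj (v $ l) * (cnj (U $$ (r, l)) * U $$ (r, j)))"
    by (subst sum.swap) (rule sum.cong[OF refl], rule sum.swap)
  also have "\<dots> = (\<Sum>j<d. \<Sum>l<d. v $ j * cnj (v $ l) * (if l = j then 1 else 0))"
    by (simp add: sum_distrib_left[symmetric] unitary_left[OF Uu])
  also have "\<dots> = (\<Sum>j<d. v $ j * cnj (v $ j))"
    by (simp add: if_distrib cong: if_cong)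
  also have "\<dots> = complex_of_real (nsq v)"
  proof -
    have dv: "dim_vec v = d" using v by simp
    show ?thesis by (simp only: nsq_def of_real_sum dv complex_norm_square)
  qed
  finally show "nsq (U *\<^sub>v v) = nsq v" by (simp only: of_real_eq_iff)
qed

definition vd :: "nat \<Rightarrow> complex vec \<Rightarrow> complex vec \<Rightarrow> real" where
  "vd d v w = L2_set (\<lambda>r. cmod (v $ r - w $ r)) {..<d}"

definition pn :: "nat \<Rightarrow> nat \<Rightarrow> nat \<Rightarrow> complex vec \<Rightarrow> real" where
  "pn n d i w = L2_set (\<lambda>r. if r mod n = i then cmod (w $ r) else 0) {..<d}"

lemma L2_reindex:
  assumes "\<And>r. r < d \<Longrightarrow> \<sigma> (\<sigma> r) = r" "\<And>r. r < d \<Longrightarrow> \<sigma> r < d"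
  shows "L2_set (\<lambda>r. g (\<sigma> r)) {..<d} = L2_set g {..<d}"
  unfolding L2_set_def
  by (rule arg_cong[where f=sqrt], rule sum.reindex_bij_witness[of _ \<sigma> \<sigma>]) (use assms in auto)

lemma query_carrier: "query_op n m x \<in> carrier_mat (qdim n m) (qdim n m)"
  unfolding query_op_def by (rule mat_carrier)

lemma query_nsq:
  assumes n: "n \<ge> 1" and v: "v \<in> carrier_vec (qdim n m)"
  shows "nsq (query_op n m x *\<^sub>v v) = nsq v" and "query_op n m x *\<^sub>v v \<in> carrier_vec (qdim n m)"
proof -
  show c: "query_op n m x *\<^sub>v v \<in> carrier_vec (qdim n m)" using query_carrier[of n m x] v by (rule mult_mat_vec_carrier)
  have "nsq (query_op n m x *\<^sub>v v) = (\<Sum>r<qdim n m. (cmod (v $ qsig n x r))\<^sup>2)"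
  proof -
    have dd: "dim_vec (query_op n m x *\<^sub>v v) = qdim n m" using c by (rule carrier_vecD)
    show ?thesis unfolding nsq_def dd
      by (rule sum.cong[OF refl]) (simp only: query_apply[OF n _ v] lessThan_iff)
  qed
  also have "\<dots> = nsq v" unfolding nsq_def using v
    by (intro sum.reindex_bij_witness[of _ "qsig n x" "qsig n x"]) (auto simp: qsig_props[OF n])
  finally show "nsq (query_op n m x *\<^sub>v v) = nsq v" .
qed

lemma vd_nsq: assumes "v \<in> carrier_vec d" "w \<in> carrier_vec d"
  shows "vd d v w = sqrt (nsq (v - w))"
  using assms unfolding vd_def nsq_def L2_set_def by auto

lemma unitary_vd:
  assumes Uu: "unitary_of_dim d U" and v: "v \<in> carrier_vec d" and w: "w \<in> carrier_vec d"
  shows "vd d (U *\<^sub>v v) (U *\<^sub>v w) = vd d v w"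
proof -
  have U: "U \<in> carrier_mat d d" using Uu unfolding unitary_of_dim_def by auto
  have "U *\<^sub>v v - U *\<^sub>v w = U *\<^sub>v (v - w)" using mult_minus_distrib_mat_vec[OF U v w] by simp
  then show ?thesis using vd_nsq[OF v w] vd_nsq[of "U *\<^sub>v v" d "U *\<^sub>v w"] U v w
      unitary_nsq(1)[OF Uu, of "v - w"] by auto
qed

lemma query_step:
  assumes n: "n \<ge> 1" and i: "i < n" and lx: "length x = n" and ly: "length y = n"
    and xy: "\<And>j. j < n \<Longrightarrow> j \<noteq> i \<Longrightarrow> x ! j = y ! j"
    and v: "v \<in> carrier_vec (qdim n m)" and w: "w \<in> carrier_vec (qdim n m)"
  shows "vd (qdim n m) (query_op n m x *\<^sub>v v) (query_op n m y *\<^sub>v w)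
         \<le> vd (qdim n m) v w + 2 * pn n (qdim n m) i w"
proof -
  let ?d = "qdim n m"
  let ?sx = "qsig n x" and ?sy = "qsig n y"
  define a where "a r = cmod (v $ ?sx r - w $ ?sx r)" for r
  define b where "b r = (if r mod n = i then cmod (w $ ?sx r) else 0)" for r
  define c where "c r = (if r mod n = i then cmod (w $ ?sy r) else 0)" for r
  have pt: "cmod ((query_op n m x *\<^sub>v v) $ r - (query_op n m y *\<^sub>v w) $ r) \<le> a r + b r + c r"
    if r: "r < ?d" for r
  proof -
    have e: "cmod ((query_op n m x *\<^sub>v v) $ r - (query_op n m y *\<^sub>v w) $ r)
        = cmod (v $ ?sx r - w $ ?sy r)" using query_apply[OF n r v] query_apply[OF n r w] by simp
    show ?thesis
    proof (cases "r mod n = i")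
      case False
      have "r mod n < n" using n by simp
      then have "?sx r = ?sy r" using xy[of "r mod n"] False unfolding qsig_def by auto
      then show ?thesis using e unfolding a_def b_def c_def using False by simp
    next
      case True
      have "cmod (v $ ?sx r - w $ ?sy r) \<le> cmod (v $ ?sx r - w $ ?sx r) + cmod (w $ ?sx r - w $ ?sy r)"
        using norm_triangle_ineq[of "v $ ?sx r - w $ ?sx r" "w $ ?sx r - w $ ?sy r"] by simp
      also have "cmod (w $ ?sx r - w $ ?sy r) \<le> cmod (w $ ?sx r) + cmod (w $ ?sy r)"
        by (rule norm_triangle_ineq4)
      finally show ?thesis using e True unfolding a_def b_def c_def by simp
    qed
  qed
  have "vd ?d (query_op n m x *\<^sub>v v) (query_op n m y *\<^sub>v w) \<le> L2_set (\<lambda>r. a r + b r + c r) {..<?d}"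
    unfolding vd_def by (rule L2_set_mono) (use pt in auto)
  also have "\<dots> \<le> L2_set (\<lambda>r. a r + b r) {..<?d} + L2_set c {..<?d}"
    by (rule L2_set_triangle_ineq)
  also have "\<dots> \<le> L2_set a {..<?d} + L2_set b {..<?d} + L2_set c {..<?d}"
    using L2_set_triangle_ineq[of a b] by simp
  also have "L2_set a {..<?d} = vd ?d v w"
    unfolding a_def vd_def
    by (rule L2_reindex[where g = "\<lambda>r. cmod (v $ r - w $ r)"]) (auto simp: qsig_props[OF n])
  also have "L2_set b {..<?d} = pn n ?d i w"
    unfolding b_def pn_def
    by (rule L2_reindex[where g = "\<lambda>r. if r mod n = i then cmod (w $ r) else 0" and \<sigma> = ?sx,
          simplified qsig_props(3)[OF n]]) (auto simp: qsig_props[OF n])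
  also have "L2_set c {..<?d} = pn n ?d i w"
    unfolding c_def pn_def
    by (rule L2_reindex[where g = "\<lambda>r. if r mod n = i then cmod (w $ r) else 0" and \<sigma> = ?sy,
          simplified qsig_props(3)[OF n]]) (auto simp: qsig_props[OF n])
  finally show ?thesis by simp
qed

definition stp :: "nat \<Rightarrow> nat \<Rightarrow> bool list \<Rightarrow> complex vec \<Rightarrow> complex mat \<Rightarrow> complex vec" where
  "stp n m x = (\<lambda>v V. V *\<^sub>v (query_op n m x *\<^sub>v v))"

lemma traj_props:
  assumes n: "n \<ge> 1" and Vs: "\<forall>V\<in>set Vs. unitary_of_dim (qdim n m) V"
    and v: "v \<in> carrier_vec (qdim n m)"
  shows "foldl (stp n m x) v Vs \<in> carrier_vec (qdim n m) \<and> nsq (foldl (stp n m x) v Vs) = nsq v"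
  using Vs v
proof (induction Vs arbitrary: v)
  case Nil
  then show ?case by simp
next
  case (Cons V Vs)
  have V: "unitary_of_dim (qdim n m) V" using Cons.prems by simp
  have q: "query_op n m x *\<^sub>v v \<in> carrier_vec (qdim n m)" "nsq (query_op n m x *\<^sub>v v) = nsq v"
    using query_nsq[OF n Cons.prems(2)] by auto
  have s: "stp n m x v V \<in> carrier_vec (qdim n m)" "nsq (stp n m x v V) = nsq v"
    unfolding stp_def using unitary_nsq[OF V q(1)] q(2) by auto
  show ?case using Cons.IH[OF _ s(1)] Cons.prems(1) s(2) by simp
qed

lemma hybrid:
  assumes n: "n \<ge> 1" and i: "i < n" and lx: "length x = n" and ly: "length y = n"
    and xy: "\<And>j. j < n \<Longrightarrow> j \<noteq> i \<Longrightarrow> x ! j = y ! j"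
    and Vs: "\<forall>V\<in>set Vs. unitary_of_dim (qdim n m) V"
    and v: "v \<in> carrier_vec (qdim n m)" and w: "w \<in> carrier_vec (qdim n m)"
  shows "vd (qdim n m) (foldl (stp n m x) v Vs) (foldl (stp n m y) w Vs)
         \<le> vd (qdim n m) v w + 2 * (\<Sum>t<length Vs. pn n (qdim n m) i (foldl (stp n m y) w (take t Vs)))"
  using Vs v w
proof (induction Vs arbitrary: v w)
  case Nil
  then show ?case by simp
next
  case (Cons V Vs)
  let ?d = "qdim n m"
  have V: "unitary_of_dim ?d V" using Cons.prems by simp
  have qv: "query_op n m x *\<^sub>v v \<in> carrier_vec ?d" using query_nsq[OF n Cons.prems(2)] by auto
  have qw: "query_op n m y *\<^sub>v w \<in> carrier_vec ?d" using query_nsq[OF n Cons.prems(3)] by auto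
  have sv: "stp n m x v V \<in> carrier_vec ?d" unfolding stp_def using unitary_nsq(2)[OF V qv] .
  have sw: "stp n m y w V \<in> carrier_vec ?d" unfolding stp_def using unitary_nsq(2)[OF V qw] .
  have one: "vd ?d (stp n m x v V) (stp n m y w V) \<le> vd ?d v w + 2 * pn n ?d i w"
    unfolding stp_def unitary_vd[OF V qv qw]
    by (rule query_step[OF n i lx ly xy Cons.prems(2,3)])
  have IH: "vd ?d (foldl (stp n m x) (stp n m x v V) Vs) (foldl (stp n m y) (stp n m y w V) Vs)
     \<le> vd ?d (stp n m x v V) (stp n m y w V) + 2 * (\<Sum>t<length Vs. pn n ?d i (foldl (stp n m y) (stp n m y w V) (take t Vs)))"
    using Cons.IH[OF _ sv sw] Cons.prems(1) by simp
  have sm: "(\<Sum>t<length (V # Vs). pn n ?d i (foldl (stp n m y) w (take t (V # Vs))))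
      = pn n ?d i w + (\<Sum>t<length Vs. pn n ?d i (foldl (stp n m y) (stp n m y w V) (take t Vs)))"
    by (simp only: length_Cons sum.lessThan_Suc_shift) simp
  show ?case using IH one sm by simp
qed

definition pv :: "nat \<Rightarrow> nat \<Rightarrow> complex vec \<Rightarrow> bool \<Rightarrow> real" where
  "pv n d a c = (\<Sum>r<d. if ((r div n) mod 2 = 1) = c then (cmod (a $ r))\<^sup>2 else 0)"

lemma pv_sum: assumes "a \<in> carrier_vec d" shows "pv n d a True + pv n d a False = nsq a"
proof -
  have da: "dim_vec a = d" using assms by simp
  show ?thesis unfolding pv_def nsq_def da sum.distrib[symmetric] by (intro sum.cong) auto
qed

lemma pv_diff:
  assumes a: "a \<in> carrier_vec d" and b: "b \<in> carrier_vec d" and na: "nsq a = 1" and nb: "nsq b = 1"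
  shows "pv n d a c - pv n d b c \<le> 2 * vd d a b"
proof -
  define R where "R = {r \<in> {..<d}. ((r div n) mod 2 = 1) = c}"
  have pvL: "pv n d u c = (L2_set (\<lambda>r. cmod (u $ r)) R)\<^sup>2" for u
  proof -
    have "pv n d u c = (\<Sum>r\<in>R. (cmod (u $ r))\<^sup>2)"
      unfolding pv_def R_def by (rule sum.inter_filter[symmetric]) simp
    moreover have "(\<Sum>r\<in>R. (cmod (u $ r))\<^sup>2) \<ge> 0" by (rule sum_nonneg) simp
    ultimately show ?thesis unfolding L2_set_def by simp
  qed
  have Rsub: "R \<subseteq> {..<d}" unfolding R_def by auto
  have le1: "L2_set (\<lambda>r. cmod (u $ r)) R \<le> 1" if "u \<in> carrier_vec d" "nsq u = 1" for u
  proof -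
    have "L2_set (\<lambda>r. cmod (u $ r)) R \<le> L2_set (\<lambda>r. cmod (u $ r)) {..<d}"
      unfolding L2_set_def by (intro real_sqrt_le_mono sum_mono2) (use Rsub in auto)
    also have "\<dots> = 1" using that unfolding L2_set_def nsq_def by simp
    finally show ?thesis .
  qed
  let ?A = "L2_set (\<lambda>r. cmod (a $ r)) R" and ?B = "L2_set (\<lambda>r. cmod (b $ r)) R"
  have "?A \<le> L2_set (\<lambda>r. cmod (a $ r - b $ r) + cmod (b $ r)) R"
  proof (rule L2_set_mono)
    fix r show "cmod (a $ r) \<le> cmod (a $ r - b $ r) + cmod (b $ r)"
      using norm_triangle_sub[of "a $ r" "b $ r"] by simp
  qed simp
  also have "\<dots> \<le> L2_set (\<lambda>r. cmod (a $ r - b $ r)) R + ?B" by (rule L2_set_triangle_ineq)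
  also have "L2_set (\<lambda>r. cmod (a $ r - b $ r)) R \<le> vd d a b"
    unfolding vd_def L2_set_def by (intro real_sqrt_le_mono sum_mono2) (use Rsub in auto)
  finally have AB: "?A - ?B \<le> vd d a b" by simp
  have A1: "?A \<le> 1" using le1 a na by blast
  have B1: "?B \<le> 1" using le1 b nb by blast
  have "?A\<^sup>2 - ?B\<^sup>2 \<le> 2 * vd d a b"
  proof (cases "?A \<le> ?B")
    case True
    then have "?A\<^sup>2 \<le> ?B\<^sup>2" by (intro power_mono) auto
    moreover have "0 \<le> vd d a b" unfolding vd_def by simp
    ultimately show ?thesis by linarith
  next
    case False
    have "?A\<^sup>2 - ?B\<^sup>2 = (?A - ?B) * (?A + ?B)" by (simp add: power2_eq_square algebra_simps)
    also have "\<dots> \<le> vd d a b * 2"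
      using False AB A1 B1 by (intro mult_mono) auto
    finally show ?thesis by simp
  qed
  then show ?thesis using pvL by simp
qed

lemma pn_sum:
  assumes S: "finite S" and w: "w \<in> carrier_vec d"
  shows "(\<Sum>i\<in>S. pn n d i w) \<le> sqrt (card S) * sqrt (nsq w)"
proof -
  have "(\<Sum>i\<in>S. pn n d i w) = (\<Sum>i\<in>S. \<bar>pn n d i w\<bar> * \<bar>1\<bar>)"
    unfolding pn_def by simp
  also have "\<dots> \<le> L2_set (\<lambda>i. pn n d i w) S * L2_set (\<lambda>i. 1) S" by (rule L2_set_mult_ineq)
  also have "L2_set (\<lambda>i. 1::real) S = sqrt (card S)" by (simp add: L2_set_constant)
  finally have A: "(\<Sum>i\<in>S. pn n d i w) \<le> L2_set (\<lambda>i. pn n d i w) S * sqrt (card S)" .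
  have B: "L2_set (\<lambda>i. pn n d i w) S \<le> sqrt (nsq w)"
  proof -
    have sq: "(pn n d i w)\<^sup>2 = (\<Sum>r<d. if r mod n = i then (cmod (w $ r))\<^sup>2 else 0)" for i
      unfolding pn_def L2_set_def by (subst real_sqrt_pow2) (auto intro!: sum_nonneg sum.cong)
    have "(\<Sum>i\<in>S. (pn n d i w)\<^sup>2) = (\<Sum>r<d. \<Sum>i\<in>S. if r mod n = i then (cmod (w $ r))\<^sup>2 else 0)"
      unfolding sq by (rule sum.swap)
    also have "\<dots> = (\<Sum>r<d. if r mod n \<in> S then (cmod (w $ r))\<^sup>2 else 0)"
      using S by (simp add: sum.delta)
    also have "\<dots> \<le> (\<Sum>r<d. (cmod (w $ r))\<^sup>2)" by (intro sum_mono) auto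
    also have "\<dots> = nsq w" using w unfolding nsq_def by simp
    finally show ?thesis unfolding L2_set_def by (rule real_sqrt_le_mono)
  qed
  have "L2_set (\<lambda>i. pn n d i w) S * sqrt (card S) \<le> sqrt (nsq w) * sqrt (card S)"
    using B by (rule mult_right_mono) simp
  then show ?thesis using A by (simp add: mult.commute)
qed

lemma finite_inputs: "finite (inputs n)"
proof -
  have "inputs n = {xs. set xs \<subseteq> (UNIV::bool set) \<and> length xs = n}" unfolding inputs_def by auto
  then show ?thesis using finite_lists_length_eq[of "UNIV::bool set" n] by simp
qed

lemma final_state_Cons: "final_state n m (U # Us) x = foldl (stp n m x) (U *\<^sub>v unit_vec (qdim n m) 0) Us"
  unfolding stp_def by simp

lemma start_props:
  assumes n: "n \<ge> 1" and m: "m \<ge> 1" and U: "unitary_of_dim (qdim n m) U"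
  shows "U *\<^sub>v unit_vec (qdim n m) 0 \<in> carrier_vec (qdim n m)"
    and "nsq (U *\<^sub>v unit_vec (qdim n m) 0) = 1"
proof -
  have d: "0 < qdim n m" using n m unfolding qdim_def by simp
  have e: "unit_vec (qdim n m) 0 \<in> carrier_vec (qdim n m)" by simp
  show "U *\<^sub>v unit_vec (qdim n m) 0 \<in> carrier_vec (qdim n m)" using unitary_nsq(2)[OF U e] .
  have "nsq (unit_vec (qdim n m) 0) = (\<Sum>r<qdim n m. if r = 0 then 1 else 0)"
    unfolding nsq_def by (intro sum.cong) (auto simp: unit_vec_def)
  also have "\<dots> = 1" using d by (simp add: sum.delta)
  finally show "nsq (U *\<^sub>v unit_vec (qdim n m) 0) = 1" using unitary_nsq(1)[OF U e] by simp
qed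

lemma final_props:
  assumes n: "n \<ge> 1" and va: "valid_alg n m Us"
  shows "final_state n m Us x \<in> carrier_vec (qdim n m) \<and> nsq (final_state n m Us x) = 1"
proof -
  obtain U Us' where Us: "Us = U # Us'" using va unfolding valid_alg_def by (cases Us) auto
  have m: "m \<ge> 1" and U: "unitary_of_dim (qdim n m) U" and Vs: "\<forall>V\<in>set Us'. unitary_of_dim (qdim n m) V"
    using va unfolding valid_alg_def Us by auto
  show ?thesis unfolding Us final_state_Cons
    using traj_props[OF n Vs start_props(1)[OF n m U], of x] start_props(2)[OF n m U] by simp
qed

lemma prob_eq: "prob_output n m Us x c = pv n (qdim n m) (final_state n m Us x) c"
  unfolding prob_output_def pv_def by simp

lemma alg_bound:
  assumes n: "n \<ge> 1" and va: "valid_alg n m Us" and y: "y \<in> inputs n"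
    and S: "finite S" "S \<subseteq> {..<n}"
    and fS: "\<And>i. i \<in> S \<Longrightarrow> f (y[i := \<not> y ! i]) \<noteq> f y"
  shows "real (card S) * bias n f m Us \<le> 2 * real (num_queries Us) * sqrt (card S)"
proof -
  let ?d = "qdim n m"
  obtain U Us' where Us: "Us = U # Us'" using va unfolding valid_alg_def by (cases Us) auto
  have m: "m \<ge> 1" and U: "unitary_of_dim ?d U" and Vs: "\<forall>V\<in>set Us'. unitary_of_dim ?d V"
    using va unfolding valid_alg_def Us by auto
  define v0 where "v0 = U *\<^sub>v unit_vec ?d 0"
  have v0: "v0 \<in> carrier_vec ?d" "nsq v0 = 1" unfolding v0_def using start_props[OF n m U] by auto
  define w where "w t = foldl (stp n m y) v0 (take t Us')" for t
  have w: "w t \<in> carrier_vec ?d" "nsq (w t) = 1" for t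
    unfolding w_def using traj_props[OF n _ v0(1), of "take t Us'" y] Vs v0(2) by (auto dest: in_set_takeD)
  have T: "num_queries Us = length Us'" unfolding num_queries_def Us by simp
  have ly: "length y = n" using y unfolding inputs_def by simp
  let ?sp = "success_prob n f m Us"
  have sp: "?sp \<le> prob_output n m Us x (f x)" if "x \<in> inputs n" for x
    unfolding success_prob_def using that finite_inputs by (intro Min_le) auto
  have each: "2 * bias n f m Us \<le> 4 * (\<Sum>t<length Us'. pn n ?d i (w t))" if i: "i \<in> S" for i
  proof -
    define x where "x = y[i := \<not> y ! i]"
    have iN: "i < n" using i S by auto
    have lx: "length x = n" unfolding x_def using ly by simp
    have xi: "x \<in> inputs n" using lx unfolding inputs_def by simp
    have xy: "\<And>j. j < n \<Longrightarrow> j \<noteq> i \<Longrightarrow> x ! j = y ! j" unfolding x_def by simp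
    have fx: "f x = (\<not> f y)" using fS[OF i] unfolding x_def by auto
    have fin: "final_state n m Us z \<in> carrier_vec ?d \<and> nsq (final_state n m Us z) = 1" for z
      using final_props[OF n va] .
    have "prob_output n m Us y (f x) = 1 - prob_output n m Us y (f y)"
      using pv_sum[of "final_state n m Us y" ?d n] fin[of y] fx unfolding prob_eq by (cases "f y") auto
    then have "2 * bias n f m Us \<le> prob_output n m Us x (f x) - prob_output n m Us y (f x)"
      using sp[OF xi] sp[OF y] unfolding bias_def by simp
    also have "\<dots> \<le> 2 * vd ?d (final_state n m Us x) (final_state n m Us y)"
      unfolding prob_eq using pv_diff fin[of x] fin[of y] by blast
    also have "vd ?d (final_state n m Us x) (final_state n m Us y) \<le> vd ?d v0 v0 + 2 * (\<Sum>t<length Us'. pn n ?d i (w t))"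
      unfolding Us final_state_Cons v0_def[symmetric] w_def
      by (rule hybrid[OF n iN lx ly xy Vs v0(1) v0(1)])
    also have "vd ?d v0 v0 = 0" unfolding vd_def by (simp add: L2_set_def)
    finally show ?thesis by simp
  qed
  have "real (card S) * (2 * bias n f m Us) = (\<Sum>i\<in>S. 2 * bias n f m Us)" by simp
  also have "\<dots> \<le> (\<Sum>i\<in>S. 4 * (\<Sum>t<length Us'. pn n ?d i (w t)))" by (rule sum_mono) (rule each)
  also have "\<dots> = 4 * (\<Sum>t<length Us'. \<Sum>i\<in>S. pn n ?d i (w t))"
    by (simp add: sum_distrib_left[symmetric] sum.swap[of _ S])
  also have "\<dots> \<le> 4 * (\<Sum>t<length Us'. sqrt (card S))"
    using pn_sum[OF S(1) w(1)] w(2) by (intro mult_left_mono sum_mono) auto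
  also have "\<dots> = 4 * real (num_queries Us) * sqrt (card S)" unfolding T by simp
  finally show ?thesis by simp
qed

lemma hw_update:
  "i < length xs \<Longrightarrow> hamming_weight (xs[i := b]) + (if xs ! i then 1 else 0)
     = hamming_weight xs + (if b then 1 else 0)"
proof (induction xs arbitrary: i)
  case Nil
  then show ?case by simp
next
  case (Cons a xs)
  show ?case
  proof (cases i)
    case 0
    then show ?thesis unfolding hamming_weight_def by auto
  next
    case (Suc j)
    then have "j < length xs" using Cons.prems by simp
    then show ?thesis using Cons.IH[of j] Suc unfolding hamming_weight_def by auto
  qed
qed

definition cw :: "nat \<Rightarrow> nat \<Rightarrow> bool list" where
  "cw n k = replicate k True @ replicate (n - k) False"

lemma cw_props:
  assumes "k \<le> n"
  shows "cw n k \<in> inputs n" and "hamming_weight (cw n k) = k"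
    and "i < n \<Longrightarrow> cw n k ! i = (i < k)"
  using assms unfolding cw_def inputs_def hamming_weight_def by (auto simp: nth_append)

lemma hw_le: "x \<in> inputs n \<Longrightarrow> hamming_weight x \<le> n"
  unfolding inputs_def hamming_weight_def by (auto intro: order_trans[OF length_filter_le])

lemma sym_val:
  assumes "symmetric_fun n f" "x \<in> inputs n"
  shows "f x = f (cw n (hamming_weight x))"
  using assms cw_props[OF hw_le[OF assms(2)]] unfolding symmetric_fun_def by metis

lemma exists_adjacent:
  assumes sy: "symmetric_fun n f" and nc: "nonconstant_fun n f"
  shows "\<exists>k<n. f (cw n k) \<noteq> f (cw n (Suc k))"
proof (rule ccontr)
  assume "\<not> ?thesis"
  then have adj: "\<And>k. k < n \<Longrightarrow> f (cw n k) = f (cw n (Suc k))" by auto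
  have all: "a \<le> n \<Longrightarrow> f (cw n a) = f (cw n 0)" for a
    by (induction a) (use adj in auto)
  obtain x y where x: "x \<in> inputs n" and y: "y \<in> inputs n" and d: "f x \<noteq> f y"
    using nc unfolding nonconstant_fun_def by auto
  show False using d sym_val[OF sy x] sym_val[OF sy y] all[OF hw_le[OF x]] all[OF hw_le[OF y]] by simp
qed

lemma good_set:
  assumes n: "n \<ge> 1" and sy: "symmetric_fun n f" and nc: "nonconstant_fun n f"
  shows "\<exists>y\<in>inputs n. \<exists>S. finite S \<and> S \<subseteq> {..<n} \<and> n \<le> 2 * card S \<and>
            (\<forall>i\<in>S. f (y[i := \<not> y ! i]) \<noteq> f y)"
proof -
  obtain k where k: "k < n" and fk: "f (cw n k) \<noteq> f (cw n (Suc k))"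
    using exists_adjacent[OF sy nc] by auto
  show ?thesis
  proof (cases "k + 1 \<le> n - k")
    case True
    let ?y = "cw n k"
    have y: "?y \<in> inputs n" using cw_props k by simp
    have "f (?y[i := \<not> ?y ! i]) \<noteq> f ?y" if i: "i \<in> {k..<n}" for i
    proof -
      have yi: "?y ! i = False" using cw_props(3)[of k n i] i k by simp
      have l: "i < length ?y" using i unfolding cw_def by simp
      have hw: "hamming_weight (?y[i := \<not> ?y ! i]) = Suc k"
        using hw_update[OF l, of True] yi cw_props(2)[of k n] k by simp
      have yin: "?y[i := \<not> ?y ! i] \<in> inputs n" using y unfolding inputs_def by simp
      show ?thesis using sym_val[OF sy yin] hw fk by simp
    qed
    moreover have "n \<le> 2 * card {k..<n}" using True by simp
    ultimately show ?thesis using y by (intro bexI[of _ ?y] exI[of _ "{k..<n}"]) auto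
  next
    case False
    let ?y = "cw n (Suc k)"
    have y: "?y \<in> inputs n" using cw_props k by simp
    have "f (?y[i := \<not> ?y ! i]) \<noteq> f ?y" if i: "i \<in> {..<Suc k}" for i
    proof -
      have yi: "?y ! i = True" using cw_props(3)[of "Suc k" n i] i k by simp
      have l: "i < length ?y" using i k unfolding cw_def by simp
      have hw: "hamming_weight (?y[i := \<not> ?y ! i]) = k"
        using hw_update[OF l, of False] yi cw_props(2)[of "Suc k" n] k by simp
      have yin: "?y[i := \<not> ?y ! i] \<in> inputs n" using y unfolding inputs_def by simp
      show ?thesis using sym_val[OF sy yin] hw fk by simp
    qed
    moreover have "n \<le> 2 * card {..<Suc k}" using False by simp
    ultimately show ?thesis using y k by (intro bexI[of _ ?y] exI[of _ "{..<Suc k}"]) auto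
  qed
qed

lemma real_bound:
  fixes N T :: nat and b :: real and n :: nat
  assumes b: "b > 0" and N: "real n \<le> 2 * real N" and n: "n \<ge> 1"
    and ineq: "real N * b \<le> 2 * real T * sqrt N"
  shows "real T + log 2 (1 / (2 * b)) \<ge> (1/2) * log 2 (real n) - 3"
proof -
  have N1: "N \<ge> 1" using N n by simp
  have sN: "sqrt N > 0" using N1 by simp
  have NN: "real N = sqrt N * sqrt N" by simp
  have "sqrt N * (sqrt N * b) \<le> sqrt N * (2 * real T)" using ineq NN by (simp add: mult_ac)
  then have bT: "sqrt N * b \<le> 2 * real T" using sN by simp
  have "sqrt N * b > 0" using sN b by (rule mult_pos_pos)
  then have T0: "T > 0" using bT by (cases "T = 0") auto
  have pos: "sqrt N / (4 * real T) > 0" using sN T0 by simp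
  have "sqrt N / (4 * real T) \<le> 1 / (2 * b)"
    using bT b T0 sN by (simp add: field_simps)
  then have "log 2 (sqrt N / (4 * real T)) \<le> log 2 (1 / (2 * b))"
    using pos by (intro log_mono) auto
  moreover have "log 2 (sqrt N / (4 * real T)) = log 2 (sqrt N) - 2 - log 2 T"
  proof -
    have "log 2 (sqrt N / (4 * real T)) = log 2 (sqrt N) - log 2 (4 * real T)"
      using sN T0 by (simp add: log_divide)
    also have "log 2 (4 * real T) = log 2 4 + log 2 T" using T0 by (simp add: log_mult)
    also have "log 2 (4::real) = 2"
    proof -
      have "(4::real) = 2 ^ 2" by simp
      then show ?thesis using log_pow_cancel[of "2::real" 2] by simp
    qed
    finally show ?thesis by simp
  qed
  moreover have "log 2 (sqrt N) = (1/2) * log 2 N"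
    using N1 by (simp add: sqrt_def log_root)
  moreover have "log 2 N \<ge> log 2 n - 1"
  proof -
    have "log 2 n \<le> log 2 (2 * N)" using N n by (simp add: log_le_cancel_iff)
    also have "\<dots> = 1 + log 2 N" using N1 by (simp add: log_mult)
    finally show ?thesis by simp
  qed
  moreover have "log 2 T \<le> T"
  proof -
    have "real T \<le> 2 powr real T"
      using less_exp[of T] by (simp add: powr_realpow)
    then have "log 2 T \<le> log 2 (2 powr real T)" using T0 by (intro log_mono) auto
    then show ?thesis by simp
  qed
  ultimately show ?thesis by linarith
qed

lemma cost_bound:
  assumes n: "n \<ge> 1" and sy: "symmetric_fun n f" and nc: "nonconstant_fun n f"
    and va: "valid_alg n m Us" and b: "bias n f m Us > 0"
  shows "wu_cost n f m Us \<ge> (1/2) * log 2 (real n) - 3"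
proof -
  obtain y S where y: "y \<in> inputs n" and S: "finite S" "S \<subseteq> {..<n}" "n \<le> 2 * card S"
    and fS: "\<forall>i\<in>S. f (y[i := \<not> y ! i]) \<noteq> f y"
    using good_set[OF n sy nc] by blast
  have "real (card S) * bias n f m Us \<le> 2 * real (num_queries Us) * sqrt (card S)"
    using alg_bound[OF n va y S(1,2)] fS by blast
  then show ?thesis unfolding wu_cost_def using real_bound[OF b _ n, of "card S" "num_queries Us"] S(3) by simp
qed

section \<open>Construction of an algorithm with positive bias\<close>

definition enc :: "nat \<Rightarrow> nat \<Rightarrow> nat \<Rightarrow> nat \<Rightarrow> nat" where
  "enc n i b z = i + n * (b + 2 * z)"

definition dec :: "nat \<Rightarrow> nat \<Rightarrow> nat \<times> nat \<times> nat" where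
  "dec n c = (c mod n, c div n mod 2, c div (2 * n))"

definition encT :: "nat \<Rightarrow> nat \<times> nat \<times> nat \<Rightarrow> nat" where
  "encT n t = (case t of (i, b, z) \<Rightarrow> enc n i b z)"

definition box :: "nat \<Rightarrow> nat \<Rightarrow> (nat \<times> nat \<times> nat) set" where
  "box n M = {..<n} \<times> {..<2} \<times> {..<M}"

lemma enc_props:
  assumes n: "n \<ge> 1" and i: "i < n" and b: "b < 2"
  shows "enc n i b z mod n = i" "enc n i b z div n mod 2 = b" "enc n i b z div (2 * n) = z"
    and "z < M \<Longrightarrow> enc n i b z < qdim n M"
proof -
  have dv: "enc n i b z div n = b + 2 * z" unfolding enc_def using div_lin(1)[OF n i] by blast
  show "enc n i b z mod n = i" unfolding enc_def using div_lin(2)[OF n i] by blast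
  show "enc n i b z div n mod 2 = b" using dv b by simp
  have "enc n i b z div n div 2 = z" using dv b by simp
  then show "enc n i b z div (2 * n) = z" by (simp add: div_mult2_eq mult.commute)
  assume z: "z < M"
  have "enc n i b z < n + n * (1 + 2 * z)"
    unfolding enc_def using i b by (intro add_less_le_mono mult_le_mono) auto
  also have "\<dots> = n * (2 * (z + 1))" by (simp add: algebra_simps)
  also have "\<dots> \<le> n * (2 * M)" using z by (intro mult_le_mono) auto
  finally show "enc n i b z < qdim n M" unfolding qdim_def by simp
qed

lemma dec_box: assumes n: "n \<ge> 1" and c: "c < qdim n M" shows "dec n c \<in> box n M"
proof -
  have "c div (2 * n) < M" using c unfolding qdim_def by (intro less_mult_imp_div_less) (simp add: mult.commute)
  then show ?thesis using n unfolding dec_def box_def by auto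
qed

lemma encT_dec: "encT n (dec n c) = c"
  unfolding encT_def dec_def enc_def using decomp[of c n] by simp

lemma dec_encT: assumes n: "n \<ge> 1" and t: "t \<in> box n M" shows "dec n (encT n t) = t"
  using t enc_props[OF n] unfolding box_def encT_def dec_def by auto

lemma encT_lt: assumes n: "n \<ge> 1" and t: "t \<in> box n M" shows "encT n t < qdim n M"
  using t enc_props(4)[OF n] unfolding box_def encT_def by auto

definition tperm :: "nat \<Rightarrow> (nat \<times> nat \<times> nat \<Rightarrow> nat \<times> nat \<times> nat) \<Rightarrow> nat \<Rightarrow> nat" where
  "tperm n \<phi> c = encT n (\<phi> (dec n c))"

lemma tperm_bij:
  assumes n: "n \<ge> 1" and into: "\<And>t. t \<in> box n M \<Longrightarrow> \<phi> t \<in> box n M"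
    and inj: "inj_on \<phi> (box n M)"
  shows "bij_betw (tperm n \<phi>) {..<qdim n M} {..<qdim n M}"
proof -
  have img: "tperm n \<phi> ` {..<qdim n M} \<subseteq> {..<qdim n M}"
    unfolding tperm_def using encT_lt[OF n into[OF dec_box[OF n]]] by auto
  have ij: "inj_on (tperm n \<phi>) {..<qdim n M}"
  proof (rule inj_onI)
    fix c1 c2 assume c1: "c1 \<in> {..<qdim n M}" and c2: "c2 \<in> {..<qdim n M}"
      and eq: "tperm n \<phi> c1 = tperm n \<phi> c2"
    have b1: "dec n c1 \<in> box n M" and b2: "dec n c2 \<in> box n M" using c1 c2 dec_box[OF n] by auto
    have "dec n (tperm n \<phi> c1) = dec n (tperm n \<phi> c2)" using eq by simp
    then have "\<phi> (dec n c1) = \<phi> (dec n c2)"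
      unfolding tperm_def using dec_encT[OF n into[OF b1]] dec_encT[OF n into[OF b2]] by simp
    then have "dec n c1 = dec n c2" using inj b1 b2 by (auto dest: inj_onD)
    then show "c1 = c2" using encT_dec[of n c1] encT_dec[of n c2] by metis
  qed
  have "tperm n \<phi> ` {..<qdim n M} = {..<qdim n M}" using endo_inj_surj[OF _ img ij] by simp
  then show ?thesis using ij unfolding bij_betw_def by simp
qed

lemma tperm_enc:
  assumes n: "n \<ge> 1" and t: "(i, b, z) \<in> box n M"
  shows "tperm n \<phi> (enc n i b z) = encT n (\<phi> (i, b, z))"
  using dec_encT[OF n t] unfolding tperm_def encT_def by simp

definition pmat :: "nat \<Rightarrow> (nat \<Rightarrow> nat) \<Rightarrow> complex mat" where
  "pmat d \<sigma> = mat d d (\<lambda>(r, c). if r = \<sigma> c then 1 else 0)"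

lemma pmat_unit:
  assumes j: "j < d" and sj: "\<sigma> j < d"
  shows "pmat d \<sigma> *\<^sub>v unit_vec d j = unit_vec d (\<sigma> j)"
proof (rule eq_vecI)
  show "dim_vec (pmat d \<sigma> *\<^sub>v unit_vec d j) = dim_vec (unit_vec d (\<sigma> j))" unfolding pmat_def by simp
  fix r assume "r < dim_vec (unit_vec d (\<sigma> j))"
  then have r: "r < d" by simp
  have "(pmat d \<sigma> *\<^sub>v unit_vec d j) $ r = (\<Sum>c<d. (if r = \<sigma> c then 1 else 0) * unit_vec d j $ c)"
    using r unfolding pmat_def by (simp add: scalar_prod_def lessThan_atLeast0)
  also have "\<dots> = (\<Sum>c<d. if c = j then (if r = \<sigma> j then 1 else 0) else 0)"
    by (intro sum.cong) (auto simp: unit_vec_def)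
  also have "\<dots> = unit_vec d (\<sigma> j) $ r" using j r sj by (simp add: sum.delta unit_vec_def)
  finally show "(pmat d \<sigma> *\<^sub>v unit_vec d j) $ r = unit_vec d (\<sigma> j) $ r" .
qed

lemma pmat_unitary:
  assumes bij: "bij_betw \<sigma> {..<d} {..<d}"
  shows "unitary_of_dim d (pmat d \<sigma>)"
proof -
  let ?P = "pmat d \<sigma>"
  have P: "?P \<in> carrier_mat d d" unfolding pmat_def by simp
  have A: "mat_adjoint ?P \<in> carrier_mat d d" using P unfolding mat_adjoint_def by auto
  have "?P * mat_adjoint ?P = 1\<^sub>m d"
  proof (rule eq_matI)
    fix r s assume r: "r < dim_row (1\<^sub>m d :: complex mat)" and s: "s < dim_col (1\<^sub>m d :: complex mat)"
    then have r: "r < d" and s: "s < d" by auto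
    have "(?P * mat_adjoint ?P) $$ (r, s) = (\<Sum>c<d. ?P $$ (r, c) * mat_adjoint ?P $$ (c, s))"
      using P A r s by (simp add: scalar_prod_def lessThan_atLeast0)
    also have "\<dots> = (\<Sum>c<d. (\<lambda>u. if r = u \<and> s = u then 1 else 0) (\<sigma> c))"
      using adj_entry[OF P] r s unfolding pmat_def by (intro sum.cong) auto
    also have "\<dots> = (\<Sum>u<d. if r = u \<and> s = u then 1 else 0)"
      by (rule sum.reindex_bij_betw[OF bij])
    also have "\<dots> = (\<Sum>u<d. if u = r then (if r = s then 1 else 0) else 0)"
      by (intro sum.cong) auto
    also have "\<dots> = 1\<^sub>m d $$ (r, s)" using r s by (simp add: sum.delta)
    finally show "(?P * mat_adjoint ?P) $$ (r, s) = 1\<^sub>m d $$ (r, s)" .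
  qed (use P A in auto)
  then show ?thesis unfolding unitary_of_dim_def using P by simp
qed

lemma query_unit:
  assumes n: "n \<ge> 1" and j: "j < qdim n m"
  shows "query_op n m x *\<^sub>v unit_vec (qdim n m) j = unit_vec (qdim n m) (qsig n x j)"
proof (rule eq_vecI)
  show "dim_vec (query_op n m x *\<^sub>v unit_vec (qdim n m) j) = dim_vec (unit_vec (qdim n m) (qsig n x j))"
    using query_carrier[of n m x] by simp
  fix r assume "r < dim_vec (unit_vec (qdim n m) (qsig n x j))"
  then have r: "r < qdim n m" by simp
  have "(query_op n m x *\<^sub>v unit_vec (qdim n m) j) $ r = unit_vec (qdim n m) j $ qsig n x r"
    by (rule query_apply[OF n r]) simp
  also have "\<dots> = unit_vec (qdim n m) (qsig n x j) $ r"
    using qsig_props[OF n] r j unfolding unit_vec_def by auto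
  finally show "(query_op n m x *\<^sub>v unit_vec (qdim n m) j) $ r = unit_vec (qdim n m) (qsig n x j) $ r" .
qed

lemma qsig_enc:
  assumes n: "n \<ge> 1" and i: "i < n" and b: "b < 2"
  shows "qsig n x (enc n i b z) = enc n i (if x ! i then 1 - b else b) z"
  using enc_props[OF n i b] unfolding qsig_def flp_def enc_def by auto

lemma modinj:
  assumes "(z1::nat) < M" "z2 < M" "b \<le> 1" "(z1 + b) mod M = (z2 + b) mod M"
  shows "z1 = z2"
proof -
  have c1: "z1 + b < M \<or> z1 + b = M" and c2: "z2 + b < M \<or> z2 + b = M" using assms by auto
  show ?thesis using c1 c2 assms by (auto split: if_splits)
qed

definition phiA :: "nat \<Rightarrow> nat \<times> nat \<times> nat \<Rightarrow> nat \<times> nat \<times> nat" where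
  "phiA M t = (case t of (i, b, z) \<Rightarrow> (i, b, (z + b) mod M))"
definition phiB :: "nat \<Rightarrow> nat \<times> nat \<times> nat \<Rightarrow> nat \<times> nat \<times> nat" where
  "phiB n t = (case t of (i, b, z) \<Rightarrow> ((i + 1) mod n, b, z))"
definition phiX :: "(nat \<Rightarrow> bool) \<Rightarrow> nat \<times> nat \<times> nat \<Rightarrow> nat \<times> nat \<times> nat" where
  "phiX g t = (case t of (i, b, z) \<Rightarrow> (i, if g z then 1 - b else b, z))"

lemma phiA_ok: assumes "M \<ge> 1" shows "\<And>t. t \<in> box n M \<Longrightarrow> phiA M t \<in> box n M" "inj_on (phiA M) (box n M)"
proof -
  show "\<And>t. t \<in> box n M \<Longrightarrow> phiA M t \<in> box n M" using assms unfolding box_def phiA_def by auto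
  show "inj_on (phiA M) (box n M)"
  proof (rule inj_onI)
    fix s t assume st: "s \<in> box n M" "t \<in> box n M" "phiA M s = phiA M t"
    obtain i1 b1 z1 where s: "s = (i1, b1, z1)" by (cases s) auto
    obtain i2 b2 z2 where t: "t = (i2, b2, z2)" by (cases t) auto
    have "i1 = i2" "b1 = b2" and zz: "(z1 + b1) mod M = (z2 + b1) mod M" using st(3) unfolding s t phiA_def by auto
    moreover have "z1 < M" "z2 < M" "b1 \<le> 1" using st(1,2) unfolding s t box_def by auto
    ultimately show "s = t" unfolding s t using modinj[of z1 M z2 b1] by auto
  qed
qed

lemma phiB_ok: assumes "n \<ge> 1" shows "\<And>t. t \<in> box n M \<Longrightarrow> phiB n t \<in> box n M" "inj_on (phiB n) (box n M)"
proof -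
  show "\<And>t. t \<in> box n M \<Longrightarrow> phiB n t \<in> box n M" using assms unfolding box_def phiB_def by auto
  show "inj_on (phiB n) (box n M)"
  proof (rule inj_onI)
    fix s t assume "s \<in> box n M" "t \<in> box n M" "phiB n s = phiB n t"
    then show "s = t" unfolding box_def phiB_def using modinj[of _ n _ 1] by auto
  qed
qed

lemma phiX_ok: shows "\<And>t. t \<in> box n M \<Longrightarrow> phiX g t \<in> box n M" "inj_on (phiX g) (box n M)"
proof -
  show "\<And>t. t \<in> box n M \<Longrightarrow> phiX g t \<in> box n M" unfolding box_def phiX_def by auto
  show "inj_on (phiX g) (box n M)"
  proof (rule inj_onI)
    fix s t assume "s \<in> box n M" "t \<in> box n M" "phiX g s = phiX g t"
    then show "s = t" unfolding box_def phiX_def by (auto split: if_splits)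
  qed
qed

definition rnd :: "nat \<Rightarrow> (nat \<Rightarrow> bool) \<Rightarrow> nat \<Rightarrow> complex mat list" where
  "rnd n g j = [pmat (qdim n (n+1)) (tperm n (phiA (n+1))),
     if Suc j = n then pmat (qdim n (n+1)) (tperm n (phiX g)) else pmat (qdim n (n+1)) (tperm n (phiB n))]"

definition alg :: "nat \<Rightarrow> (nat \<Rightarrow> bool) \<Rightarrow> complex mat list" where
  "alg n g = pmat (qdim n (n+1)) id # concat (map (rnd n g) [0..<n])"

lemma hw_snoc: "hamming_weight (xs @ [a]) = hamming_weight xs + (if a then 1 else 0)"
  unfolding hamming_weight_def by simp

lemma hw_take_le: "hamming_weight (take k x) \<le> k"
  unfolding hamming_weight_def by (metis length_filter_le length_take min.bounded_iff order_trans nle_le)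

lemma sim_step:
  assumes n: "n \<ge> 1" and k: "k < n" and z: "z + 1 \<le> n" and lx: "length x = n"
  defines "d \<equiv> qdim n (n+1)"
  defines "xb \<equiv> (if x ! k then 1 else 0::nat)"
  shows "foldl (stp n (n+1) x) (unit_vec d (enc n k 0 z)) [pmat d (tperm n (phiA (n+1))), V]
     = V *\<^sub>v unit_vec d (enc n k 0 (z + xb))"
proof -
  have xb: "xb < 2" unfolding xb_def by simp
  have e0: "enc n k 0 z < d" unfolding d_def using enc_props(4)[OF n k, of 0 z "n+1"] z by simp
  have q1: "query_op n (n+1) x *\<^sub>v unit_vec d (enc n k 0 z) = unit_vec d (enc n k xb z)"
    unfolding d_def using query_unit[OF n e0[unfolded d_def]] qsig_enc[OF n k, of 0 x z] xb_def by simp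
  have bx: "(k, xb, z) \<in> box n (n+1)" using k xb z unfolding box_def by auto
  have e1: "enc n k xb z < d" unfolding d_def using enc_props(4)[OF n k xb, of z "n+1"] z by simp
  have zz: "(z + xb) mod (n+1) = z + xb" using z xb_def by auto
  have t1: "tperm n (phiA (n+1)) (enc n k xb z) = enc n k xb (z + xb)"
    using tperm_enc[OF n bx] zz unfolding phiA_def encT_def by simp
  have e2: "enc n k xb (z + xb) < d" unfolding d_def using enc_props(4)[OF n k xb, of "z+xb" "n+1"] z xb_def by simp
  have s1: "pmat d (tperm n (phiA (n+1))) *\<^sub>v unit_vec d (enc n k xb z) = unit_vec d (enc n k xb (z + xb))"
    using pmat_unit[OF e1, of "tperm n (phiA (n+1))"] t1 e2 by simp
  have q2: "query_op n (n+1) x *\<^sub>v unit_vec d (enc n k xb (z + xb)) = unit_vec d (enc n k 0 (z + xb))"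
    unfolding d_def using query_unit[OF n e2[unfolded d_def]] qsig_enc[OF n k xb, of x "z + xb"] xb_def by simp
  show ?thesis unfolding stp_def using q1 s1 q2 by simp
qed

lemma sim_prefix:
  assumes n: "n \<ge> 1" and lx: "length x = n"
  shows "k < n \<Longrightarrow> foldl (stp n (n+1) x) (unit_vec (qdim n (n+1)) 0) (concat (map (rnd n g) [0..<k]))
           = unit_vec (qdim n (n+1)) (enc n k 0 (hamming_weight (take k x)))"
proof (induction k)
  case 0
  then show ?case by (simp add: enc_def hamming_weight_def)
next
  case (Suc k)
  let ?d = "qdim n (n+1)"
  let ?st = "stp n (n+1) x"
  let ?PA = "pmat ?d (tperm n (phiA (n+1)))" and ?PB = "pmat ?d (tperm n (phiB n))"
  have k: "k < n" using Suc.prems by simp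
  let ?c = "hamming_weight (take k x)"
  obtain xb where xbd: "xb = (if x ! k then 1 else 0::nat)" by simp
  have c: "?c + 1 \<le> n" using hw_take_le[of k x] Suc.prems by simp
  have rk: "rnd n g k = [?PA, ?PB]"
    unfolding rnd_def using Suc.prems by simp
  have hw: "hamming_weight (take (Suc k) x) = ?c + xb"
    using k lx xbd by (simp add: take_Suc_conv_app_nth hw_snoc)
  have xb2: "xb \<le> 1" using xbd by simp
  have bx: "(k, 0, ?c + xb) \<in> box n (n+1)" using k c xb2 unfolding box_def by auto
  have e: "enc n k 0 (?c + xb) < ?d" using encT_lt[OF n bx] unfolding encT_def by simp
  have t: "tperm n (phiB n) (enc n k 0 (?c + xb)) = enc n (Suc k) 0 (?c + xb)"
    using tperm_enc[OF n bx] Suc.prems unfolding phiB_def encT_def by simp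
  have e2: "enc n (Suc k) 0 (?c + xb) < ?d"
    using enc_props(4)[OF n Suc.prems, of 0 "?c + xb" "n+1"] c xb2 by simp
  have "foldl ?st (unit_vec ?d 0) (concat (map (rnd n g) [0..<Suc k]))
      = foldl ?st (foldl ?st (unit_vec ?d 0) (concat (map (rnd n g) [0..<k]))) (rnd n g k)" by simp
  also have "\<dots> = foldl ?st (unit_vec ?d (enc n k 0 ?c)) [?PA, ?PB]" by (simp only: Suc.IH[OF k] rk)
  also have "\<dots> = ?PB *\<^sub>v unit_vec ?d (enc n k 0 (?c + xb))"
    by (rule sim_step[OF n k c lx, of ?PB, folded xbd])
  also have "\<dots> = unit_vec ?d (enc n (Suc k) 0 (?c + xb))"
    by (simp only: pmat_unit[OF e, of "tperm n (phiB n)"] t e2)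
  finally show ?case by (simp only: hw)
qed

lemma sim_final:
  assumes n: "n \<ge> 1" and lx: "length x = n"
  shows "final_state n (n+1) (alg n g) x
     = unit_vec (qdim n (n+1)) (enc n (n - 1) (if g (hamming_weight x) then 1 else 0) (hamming_weight x))"
proof -
  let ?d = "qdim n (n+1)"
  let ?st = "stp n (n+1) x"
  let ?PA = "pmat ?d (tperm n (phiA (n+1)))" and ?PX = "pmat ?d (tperm n (phiX g))"
  obtain k where nk: "n = Suc k" using n by (cases n) auto
  have k: "k < n" using nk by simp
  let ?c = "hamming_weight (take k x)"
  obtain xb where xbd: "xb = (if x ! k then 1 else 0::nat)" by simp
  obtain F where Fd: "F = (if g (?c + xb) then 1 else 0::nat)" by simp
  have c: "?c + 1 \<le> n" using hw_take_le[of k x] nk by simp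
  have xb2: "xb \<le> 1" using xbd by simp
  have F2: "F < 2" using Fd by simp
  have d0: "0 < ?d" using n unfolding qdim_def by simp
  have U0: "pmat ?d id *\<^sub>v unit_vec ?d 0 = unit_vec ?d 0" using pmat_unit[OF d0, of id] d0 by simp
  have rk: "rnd n g k = [?PA, ?PX]"
    unfolding rnd_def using nk by simp
  have tk: "take (Suc k) x = x" using lx nk by simp
  have hw: "hamming_weight x = ?c + xb"
    using take_Suc_conv_app_nth[of k x] lx nk hw_snoc[of "take k x" "x ! k"] xbd tk by simp
  have bx: "(k, 0, ?c + xb) \<in> box n (n+1)" using k c xb2 unfolding box_def by auto
  have e: "enc n k 0 (?c + xb) < ?d" using encT_lt[OF n bx] unfolding encT_def by simp
  have t: "tperm n (phiX g) (enc n k 0 (?c + xb)) = enc n k F (?c + xb)"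
    using tperm_enc[OF n bx] Fd unfolding phiX_def encT_def by simp
  have e2: "enc n k F (?c + xb) < ?d"
    using enc_props(4)[OF n k F2, of "?c + xb" "n+1"] c xb2 by simp
  have "final_state n (n+1) (alg n g) x
      = foldl ?st (unit_vec ?d 0) (concat (map (rnd n g) [0..<k]) @ rnd n g k)"
  proof -
    have up: "[0..<n] = [0..<k] @ [k]" using nk by simp
    show ?thesis unfolding alg_def final_state_Cons U0 up by simp
  qed
  also have "\<dots> = foldl ?st (unit_vec ?d (enc n k 0 ?c)) [?PA, ?PX]"
    by (simp only: foldl_append sim_prefix[OF n lx k, of g] rk)
  also have "\<dots> = ?PX *\<^sub>v unit_vec ?d (enc n k 0 (?c + xb))"
    by (rule sim_step[OF n k c lx, of ?PX, folded xbd])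
  also have "\<dots> = unit_vec ?d (enc n k F (?c + xb))"
    by (simp only: pmat_unit[OF e, of "tperm n (phiX g)"] t e2)
  finally show ?thesis using hw nk Fd by simp
qed

lemma alg_valid:
  assumes n: "n \<ge> 1"
  shows "valid_alg n (n+1) (alg n g)"
proof -
  let ?d = "qdim n (n+1)"
  have u: "unitary_of_dim ?d (pmat ?d (tperm n \<phi>))"
    if "\<And>t. t \<in> box n (n+1) \<Longrightarrow> \<phi> t \<in> box n (n+1)" "inj_on \<phi> (box n (n+1))" for \<phi>
    using pmat_unitary[OF tperm_bij[OF n that]] .
  have uA: "unitary_of_dim ?d (pmat ?d (tperm n (phiA (n+1))))" using u phiA_ok[where M="n+1" and n=n] by simp
  have uB: "unitary_of_dim ?d (pmat ?d (tperm n (phiB n)))" using u phiB_ok[OF n, where M="n+1"] by simp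
  have uX: "unitary_of_dim ?d (pmat ?d (tperm n (phiX g)))" using u phiX_ok[where n=n and M="n+1" and g=g] by simp
  have uI: "unitary_of_dim ?d (pmat ?d id)" by (rule pmat_unitary) simp
  show ?thesis unfolding valid_alg_def alg_def using uA uB uX uI by (auto simp: rnd_def)
qed

lemma exists_alg:
  assumes n: "n \<ge> 1" and sy: "symmetric_fun n f"
  shows "\<exists>m Us. valid_alg n m Us \<and> bias n f m Us > 0"
proof -
  define g where "g c = f (cw n c)" for c
  let ?Us = "alg n g"
  let ?d = "qdim n (n+1)"
  have p1: "prob_output n (n+1) ?Us x (f x) = 1" if x: "x \<in> inputs n" for x
  proof -
    have lx: "length x = n" using x unfolding inputs_def by simp
    let ?F = "if g (hamming_weight x) then 1 else 0::nat"
    have nn: "n - 1 < n" using n by simp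
    have F2: "?F < 2" by simp
    have bx: "(n - 1, ?F, hamming_weight x) \<in> box n (n+1)"
      using n hw_le[OF x] unfolding box_def by auto
    let ?j = "enc n (n - 1) ?F (hamming_weight x)"
    have j: "?j < ?d" using encT_lt[OF n bx] unfolding encT_def by simp
    have cb: "?j div n mod 2 = ?F" using enc_props(2)[OF n nn F2] .
    have fx: "f x = g (hamming_weight x)" unfolding g_def using sym_val[OF sy x] .
    have "prob_output n (n+1) ?Us x (f x) = (\<Sum>r<?d. if r = ?j then 1 else 0)"
      unfolding prob_output_def sim_final[OF n lx]
      using cb fx by (intro sum.cong) (auto simp: unit_vec_def)
    also have "\<dots> = 1" using j by simp
    finally show ?thesis .
  qed
  have ne: "inputs n \<noteq> {}" unfolding inputs_def by (auto intro: exI[of _ "replicate n False"])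
  have "(\<lambda>x. prob_output n (n+1) ?Us x (f x)) ` inputs n = {1}" using p1 ne by auto
  then have "success_prob n f (n+1) ?Us = 1" unfolding success_prob_def by simp
  then have "bias n f (n+1) ?Us > 0" unfolding bias_def by simp
  then show ?thesis using alg_valid[OF n] by blast
qed

theorem mainTheorem11:
  shows "\<exists>C::real. \<forall>n::nat. \<forall>f :: bool list \<Rightarrow> bool.
           n \<ge> 1 \<longrightarrow> symmetric_fun n f \<longrightarrow> nonconstant_fun n f \<longrightarrow>
           WUQ n f \<ge> (1/2) * log 2 (real n) - C"
proof (intro exI[of _ 3] allI impI)
  fix n :: nat and f :: "bool list \<Rightarrow> bool"
  assume n: "n \<ge> 1" and sy: "symmetric_fun n f" and nc: "nonconstant_fun n f"
  let ?X = "{wu_cost n f m Us | m Us. valid_alg n m Us \<and> bias n f m Us > 0}"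
  have ne: "?X \<noteq> {}" using exists_alg[OF n sy] by blast
  have lb: "\<And>c. c \<in> ?X \<Longrightarrow> (1/2) * log 2 (real n) - 3 \<le> c"
    using cost_bound[OF n sy nc] by blast
  show "(1/2) * log 2 (real n) - 3 \<le> WUQ n f"
    unfolding WUQ_def by (rule cInf_greatest[OF ne lb])
qed

end
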